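(* Let $x,y\in\mathcal{Q}^\pi$. Then $(q_n^{(x+y)})$ converges in $(\mathcal D,d)$ if and only if $(q_n^{(x,y)})$ converges in $(\mathcal D,d)$. In this case $x+y\in\mathcal Q^\pi$ and $\lim_n q_n^{(x,y)}=\tfrac12\big([x+y]_\pi-[x]_\pi-[y]_\pi\big)$.
   Context: Let $\pi=(\pi_n)_{n\ge1}$ be a sequence of partitions $\pi_n=(t^n_0,\dots,t^n_{k_n})$ with $0=t^n_0<\dots<t^n_{k_n}<\infty$, $t^n_{k_n}\uparrow\infty$, and mesh tending to $0$ on compacts; sums over $i$ run over $0\le i<k_n$. $\mathcal D$ is the space of càdlàg functions $[0,\infty)\to\mathbb R$ with a metric $d$ inducing the Skorokhod $J_1$ topology. For $u,v,w\in\mathcal D$: $q_n^{(u,v)}(t)=\sum_{i:\,t^n_i\le t}(u(t^n_{i+1})-u(t^n_i))(v(t^n_{i+1})-v(t^n_i))$ and $q_n^{(w)}=q_n^{(w,w)}$. $\mathcal Q^\pi$ is the set of $w\in\mathcal D$ such that $(q_n^{(w)})$ converges in $(\mathcal D,d)$, and for such $w$, $[w]_\pi:=\lim_n q_n^{(w)}$ in $(\mathcal D,d)$. *)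

theory Defs
  imports "HOL-Analysis.Analysis"
begin

text \<open>Sequence of partitions pi_n = (t n 0, ..., t n (k n)) of [0,infinity).\<close>
definition partition_seq :: "(nat \<Rightarrow> nat \<Rightarrow> real) \<Rightarrow> (nat \<Rightarrow> nat) \<Rightarrow> bool" where
  "partition_seq t k \<longleftrightarrow>
     (\<forall>n. t n 0 = 0) \<and>
     (\<forall>n. \<forall>i<k n. t n i < t n (Suc i)) \<and>
     mono (\<lambda>n. t n (k n)) \<and> filterlim (\<lambda>n. t n (k n)) at_top sequentially \<and>
     (\<forall>T>0. \<forall>e>0. eventually (\<lambda>n. \<forall>i<k n. t n i \<le> T \<longrightarrow> t n (Suc i) - t n i < e) sequentially)"

text \<open>Cadlag functions on [0,infinity) (values at negative times are irrelevant).\<close>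
definition cadlag :: "(real \<Rightarrow> real) \<Rightarrow> bool" where
  "cadlag f \<longleftrightarrow> (\<forall>t\<ge>0. (f \<longlongrightarrow> f t) (at_right t)) \<and>
                 (\<forall>t>0. \<exists>l. (f \<longlongrightarrow> l) (at_left t))"

definition Dspace :: "(real \<Rightarrow> real) set" where
  "Dspace = {f. cadlag f}"

definition time_change :: "(real \<Rightarrow> real) \<Rightarrow> bool" where
  "time_change l \<longleftrightarrow> continuous_on {0..} l \<and> strict_mono_on {0..} l \<and> l ` {0..} = {0..}"

text \<open>Convergence in the Skorokhod J1 topology on D[0,infinity)
  (Jacod--Shiryaev VI.1.14): f_n -> g iff there are time changes l_n with
  sup_t |l_n t - t| -> 0 and sup_{t<=T} |f_n (l_n t) - g t| -> 0 for every T.\<close>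
definition J1_conv :: "(nat \<Rightarrow> real \<Rightarrow> real) \<Rightarrow> (real \<Rightarrow> real) \<Rightarrow> bool" where
  "J1_conv f g \<longleftrightarrow> g \<in> Dspace \<and> (\<forall>n. f n \<in> Dspace) \<and>
     (\<exists>l::nat \<Rightarrow> real \<Rightarrow> real. (\<forall>n. time_change (l n)) \<and>
        (\<forall>e>0. eventually (\<lambda>n. \<forall>s\<ge>0. \<bar>l n s - s\<bar> \<le> e) sequentially) \<and>
        (\<forall>T\<ge>0. \<forall>e>0. eventually (\<lambda>n. \<forall>s\<in>{0..T}. \<bar>f n (l n s) - g s\<bar> \<le> e) sequentially))"

definition D_convergent :: "(nat \<Rightarrow> real \<Rightarrow> real) \<Rightarrow> bool" where
  "D_convergent f \<longleftrightarrow> (\<exists>g. J1_conv f g)"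

definition D_lim :: "(nat \<Rightarrow> real \<Rightarrow> real) \<Rightarrow> (real \<Rightarrow> real)" where
  "D_lim f = (THE g. J1_conv f g \<and> (\<forall>s<0. g s = 0))"

definition qvar :: "(nat \<Rightarrow> nat \<Rightarrow> real) \<Rightarrow> (nat \<Rightarrow> nat) \<Rightarrow> (real \<Rightarrow> real) \<Rightarrow> (real \<Rightarrow> real)
    \<Rightarrow> nat \<Rightarrow> real \<Rightarrow> real" where
  "qvar t k u v n s = (\<Sum>i\<in>{i. i < k n \<and> t n i \<le> s}.
      (u (t n (Suc i)) - u (t n i)) * (v (t n (Suc i)) - v (t n i)))"

definition Qpi :: "(nat \<Rightarrow> nat \<Rightarrow> real) \<Rightarrow> (nat \<Rightarrow> nat) \<Rightarrow> (real \<Rightarrow> real) set" where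
  "Qpi t k = {w \<in> Dspace. D_convergent (qvar t k w w)}"

definition qv_bracket :: "(nat \<Rightarrow> nat \<Rightarrow> real) \<Rightarrow> (nat \<Rightarrow> nat) \<Rightarrow> (real \<Rightarrow> real) \<Rightarrow> (real \<Rightarrow> real)" where
  "qv_bracket t k w = D_lim (qvar t k w w)"

end

theory Submission
  imports Defs
begin


lemma part_strict:
  assumes "partition_seq t k" "i < j" "j \<le> k n"
  shows "t n i < t n j"
  using assms(2,3)
proof (induction j)
  case 0 then show ?case by simp
next
  case (Suc j)
  have s: "t n j < t n (Suc j)" using assms(1) Suc.prems unfolding partition_seq_def by auto
  show ?case
  proof (cases "i = j")
    case True then show ?thesis using s by simp
  next
    case False then have "i < j" using Suc.prems by simp
    then have "t n i < t n j" using Suc.IH Suc.prems by simp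
    then show ?thesis using s by simp
  qed
qed

lemma part_mono:
  assumes "partition_seq t k" "i \<le> j" "j \<le> k n"
  shows "t n i \<le> t n j"
  using part_strict[OF assms(1) _ assms(3), of i] assms(2) by (cases "i = j") auto

lemma part_nonneg:
  assumes "partition_seq t k" "i \<le> k n"
  shows "t n i \<ge> 0"
  using part_mono[OF assms(1) _ assms(2), of 0] assms(1) unfolding partition_seq_def by auto

lemma part_inj:
  assumes "partition_seq t k" "i \<le> k n" "j \<le> k n" "t n i = t n j"
  shows "i = j"
  using part_strict[OF assms(1), of i j n] part_strict[OF assms(1), of j i n] assms
  by (metis less_irrefl nat_neq_iff)

lemma pi_unique:
  assumes "partition_seq t k" "i < k n" "j < k n"
    "t n i < p" "p \<le> t n (Suc i)" "t n j < p" "p \<le> t n (Suc j)"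
  shows "i = j"
proof (rule ccontr)
  assume "i \<noteq> j"
  then have "i < j \<or> j < i" by auto
  then show False
  proof
    assume "i < j"
    then have "t n (Suc i) \<le> t n j" using part_mono[OF assms(1), of "Suc i" j n] assms by auto
    then show False using assms by auto
  next
    assume "j < i"
    then have "t n (Suc j) \<le> t n i" using part_mono[OF assms(1), of "Suc j" i n] assms by auto
    then show False using assms by auto
  qed
qed

lemma fin_right:
  fixes X :: "real set"
  assumes "finite X"
  shows "\<exists>d>0. \<forall>w. s < w \<and> w < s + d \<longrightarrow> (\<forall>x\<in>X. x \<le> w \<longleftrightarrow> x \<le> s)"
proof -
  define D where "D = (\<lambda>x. x - s) ` {x\<in>X. x > s}"
  have fD: "finite D" using assms unfolding D_def by auto
  define d where "d = (if D = {} then 1 else Min D)"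
  have dpos: "d > 0" unfolding d_def using fD by (auto simp: D_def)
  have "\<forall>w. s < w \<and> w < s + d \<longrightarrow> (\<forall>x\<in>X. x \<le> w \<longleftrightarrow> x \<le> s)"
  proof (intro allI impI ballI)
    fix w x assume w: "s < w \<and> w < s + d" and x: "x \<in> X"
    show "x \<le> w \<longleftrightarrow> x \<le> s"
    proof (cases "x > s")
      case True
      then have "x - s \<in> D" unfolding D_def using x by auto
      then have "d \<le> x - s" unfolding d_def using fD by auto
      then show ?thesis using w True by auto
    next
      case False then show ?thesis using w by auto
    qed
  qed
  then show ?thesis using dpos by blast
qed

lemma fin_left:
  fixes X :: "real set"
  assumes "finite X"
  shows "\<exists>d>0. \<forall>w. s - d < w \<and> w < s \<longrightarrow> (\<forall>x\<in>X. x \<le> w \<longleftrightarrow> x < s)"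
proof -
  define D where "D = (\<lambda>x. s - x) ` {x\<in>X. x < s}"
  have fD: "finite D" using assms unfolding D_def by auto
  define d where "d = (if D = {} then 1 else Min D)"
  have dpos: "d > 0" unfolding d_def using fD by (auto simp: D_def)
  have "\<forall>w. s - d < w \<and> w < s \<longrightarrow> (\<forall>x\<in>X. x \<le> w \<longleftrightarrow> x < s)"
  proof (intro allI impI ballI)
    fix w x assume w: "s - d < w \<and> w < s" and x: "x \<in> X"
    show "x \<le> w \<longleftrightarrow> x < s"
    proof (cases "x < s")
      case True
      then have "s - x \<in> D" unfolding D_def using x by auto
      then have "d \<le> s - x" unfolding d_def using fD by auto
      then show ?thesis using w True by auto
    next
      case False then show ?thesis using w by auto
    qed
  qed
  then show ?thesis using dpos by blast
qed

definition qlt :: "(nat \<Rightarrow> nat \<Rightarrow> real) \<Rightarrow> (nat \<Rightarrow> nat) \<Rightarrow> (real \<Rightarrow> real) \<Rightarrow> (real \<Rightarrow> real)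
    \<Rightarrow> nat \<Rightarrow> real \<Rightarrow> real" where
  "qlt t k u v n s = (\<Sum>i\<in>{i. i < k n \<and> t n i < s}.
      (u (t n (Suc i)) - u (t n i)) * (v (t n (Suc i)) - v (t n i)))"

lemma qvar_right:
  "\<exists>d>0. \<forall>w. s < w \<and> w < s + d \<longrightarrow> qvar t k u v n w = qvar t k u v n s"
proof -
  obtain d where d: "d > 0" "\<forall>w. s < w \<and> w < s + d \<longrightarrow> (\<forall>x\<in>t n ` {..<k n}. x \<le> w \<longleftrightarrow> x \<le> s)"
    using fin_right[of "t n ` {..<k n}" s] by auto
  have "\<forall>w. s < w \<and> w < s + d \<longrightarrow> qvar t k u v n w = qvar t k u v n s"
  proof (intro allI impI)
    fix w assume w: "s < w \<and> w < s + d"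
    have "{i. i < k n \<and> t n i \<le> w} = {i. i < k n \<and> t n i \<le> s}" using d(2) w by auto
    then show "qvar t k u v n w = qvar t k u v n s" unfolding qvar_def by simp
  qed
  then show ?thesis using d(1) by blast
qed

lemma qvar_left:
  "\<exists>d>0. \<forall>w. s - d < w \<and> w < s \<longrightarrow> qvar t k u v n w = qlt t k u v n s"
proof -
  obtain d where d: "d > 0" "\<forall>w. s - d < w \<and> w < s \<longrightarrow> (\<forall>x\<in>t n ` {..<k n}. x \<le> w \<longleftrightarrow> x < s)"
    using fin_left[of "t n ` {..<k n}" s] by auto
  have "\<forall>w. s - d < w \<and> w < s \<longrightarrow> qvar t k u v n w = qlt t k u v n s"
  proof (intro allI impI)
    fix w assume w: "s - d < w \<and> w < s"
    have "{i. i < k n \<and> t n i \<le> w} = {i. i < k n \<and> t n i < s}" using d(2) w by auto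
    then show "qvar t k u v n w = qlt t k u v n s" unfolding qvar_def qlt_def by simp
  qed
  then show ?thesis using d(1) by blast
qed

lemma qvar_Dspace: "qvar t k u v n \<in> Dspace"
  unfolding Dspace_def cadlag_def
proof (intro CollectI conjI allI impI)
  fix s :: real
  obtain d where d: "d > 0" "\<forall>w. s < w \<and> w < s + d \<longrightarrow> qvar t k u v n w = qvar t k u v n s"
    using qvar_right by blast
  have "eventually (\<lambda>w. w \<in> {s<..<s+d}) (at_right s)"
    using eventually_at_right_real d(1) by simp
  then have "eventually (\<lambda>w. qvar t k u v n w = qvar t k u v n s) (at_right s)"
    by eventually_elim (use d in auto)
  then show "(qvar t k u v n \<longlongrightarrow> qvar t k u v n s) (at_right s)" by (rule tendsto_eventually)
next
  fix s :: real
  obtain d where d: "d > 0" "\<forall>w. s - d < w \<and> w < s \<longrightarrow> qvar t k u v n w = qlt t k u v n s"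
    using qvar_left by blast
  have "eventually (\<lambda>w. w \<in> {s-d<..<s}) (at_left s)"
    using eventually_at_left_real d(1) by simp
  then have "eventually (\<lambda>w. qvar t k u v n w = qlt t k u v n s) (at_left s)"
    by eventually_elim (use d in auto)
  then show "\<exists>l. (qvar t k u v n \<longlongrightarrow> l) (at_left s)" using tendsto_eventually by blast
qed

lemma qvar_jump:
  assumes "partition_seq t k" "qvar t k u v n q \<noteq> qlt t k u v n q"
  shows "\<exists>i<k n. t n i = q \<and> qvar t k u v n q - qlt t k u v n q =
            (u (t n (Suc i)) - u (t n i)) * (v (t n (Suc i)) - v (t n i))"
proof -
  let ?f = "\<lambda>i. (u (t n (Suc i)) - u (t n i)) * (v (t n (Suc i)) - v (t n i))"
  have split: "{i. i < k n \<and> t n i \<le> q} = {i. i < k n \<and> t n i < q} \<union> {i. i < k n \<and> t n i = q}"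
    by auto
  have "qvar t k u v n q = qlt t k u v n q + sum ?f {i. i < k n \<and> t n i = q}"
    unfolding qvar_def qlt_def split by (rule sum.union_disjoint) auto
  then have ne: "sum ?f {i. i < k n \<and> t n i = q} \<noteq> 0" using assms(2) by auto
  then obtain i where i: "i < k n" "t n i = q" by (metis (mono_tags, lifting) empty_Collect_eq sum.empty)
  have "{i. i < k n \<and> t n i = q} = {i}"
    using i part_inj[OF assms(1), of _ n i] by auto
  then show ?thesis using i \<open>qvar t k u v n q = _\<close> by auto
qed

lemma Dspace_lin:
  assumes "f \<in> Dspace" "g \<in> Dspace"
  shows "(\<lambda>s. a * f s + b * g s) \<in> Dspace"
  using assms unfolding Dspace_def cadlag_def
  by (auto intro!: tendsto_intros) (metis tendsto_add tendsto_mult_left)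



lemma tc_id: "time_change (\<lambda>s. s)"
  unfolding time_change_def by (auto simp: strict_mono_on_def)

lemma tc_comp:
  assumes "time_change f" "time_change g"
  shows "time_change (\<lambda>s. f (g s))"
proof -
  have gi: "g ` {0..} = {0..}" using assms(2) unfolding time_change_def by auto
  have "continuous_on {0..} (f \<circ> g)"
    apply (rule continuous_on_compose)
    using assms unfolding time_change_def by auto
  moreover have "strict_mono_on {0..} (\<lambda>s. f (g s))"
  proof (rule strict_mono_onI)
    fix r s :: real assume rs: "r \<in> {0..}" "s \<in> {0..}" "r < s"
    have "g r < g s" "g r \<in> {0..}" "g s \<in> {0..}"
      using assms(2) rs gi unfolding time_change_def strict_mono_on_def by auto
    then show "f (g r) < f (g s)" using assms(1) unfolding time_change_def strict_mono_on_def by auto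
  qed
  moreover have "(\<lambda>s. f (g s)) ` {0..} = {0..}"
  proof -
    have "(\<lambda>s. f (g s)) ` {0..} = f ` (g ` {0..})" by (simp add: image_image)
    then show ?thesis using assms(1) gi unfolding time_change_def by simp
  qed
  ultimately show ?thesis unfolding time_change_def by (simp add: comp_def)
qed

lemma tc_0: assumes "time_change f" "s \<ge> 0" shows "f s \<ge> 0"
  using assms unfolding time_change_def by auto

lemma tc_mono: assumes "time_change f" "0 \<le> a" "a < b" shows "f a < f b"
  using assms unfolding time_change_def strict_mono_on_def by auto

lemma tc_inv:
  assumes "time_change f" "w \<ge> 0"
  obtains s where "s \<ge> 0" "f s = w"
  using assms unfolding time_change_def by (metis atLeast_iff imageE)

definition bump :: "real \<Rightarrow> real \<Rightarrow> real \<Rightarrow> real \<Rightarrow> real" where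
  "bump a b g s = s + (b - a) * max 0 (1 - \<bar>s - a\<bar> / g)"

lemma bump_at: "g > 0 \<Longrightarrow> bump a b g a = b" unfolding bump_def by simp

lemma bump_out: "g > 0 \<Longrightarrow> \<bar>s - a\<bar> \<ge> g \<Longrightarrow> bump a b g s = s"
  unfolding bump_def by (auto simp: field_simps)

lemma bump_disp: "g > 0 \<Longrightarrow> \<bar>bump a b g s - s\<bar> \<le> \<bar>b - a\<bar>"
proof -
  assume g: "g > 0"
  have "max 0 (1 - \<bar>s - a\<bar> / g) \<le> 1" using g by auto
  moreover have "max 0 (1 - \<bar>s - a\<bar> / g) \<ge> 0" by auto
  ultimately have "\<bar>(b - a) * max 0 (1 - \<bar>s - a\<bar> / g)\<bar> \<le> \<bar>b - a\<bar>"
    by (simp add: abs_mult mult_left_le)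
  then show ?thesis unfolding bump_def by simp
qed

lemma aux_lin: "-((s'::real) - s) < A - B \<Longrightarrow> s + B < s' + A" by linarith

lemma bump_tc:
  assumes g: "g > 0" "g \<le> a" "\<bar>b - a\<bar> < g"
  shows "time_change (bump a b g)"
proof -
  have cont: "continuous_on UNIV (bump a b g)"
    unfolding bump_def using g(1) by (intro continuous_intros) auto
  have sm: "bump a b g s < bump a b g s'" if "s < s'" for s s'
  proof -
    have l: "\<bar>max 0 (1 - \<bar>s' - a\<bar> / g) - max 0 (1 - \<bar>s - a\<bar> / g)\<bar> \<le> (s' - s) / g"
    proof -
      have "\<bar>max 0 (1 - \<bar>s' - a\<bar> / g) - max 0 (1 - \<bar>s - a\<bar> / g)\<bar>
            \<le> \<bar>(1 - \<bar>s' - a\<bar> / g) - (1 - \<bar>s - a\<bar> / g)\<bar>" by (auto simp: max_def)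
      also have "\<dots> = \<bar>(\<bar>s - a\<bar> - \<bar>s' - a\<bar>) / g\<bar>" by (simp add: diff_divide_distrib)
      also have "\<dots> = \<bar>\<bar>s' - a\<bar> - \<bar>s - a\<bar>\<bar> / g" using g by (simp add: abs_minus_commute)
      also have "\<dots> \<le> (s' - s) / g" using g that by (intro divide_right_mono) auto
      finally show ?thesis .
    qed
    have "\<bar>(b - a) * (max 0 (1 - \<bar>s' - a\<bar> / g) - max 0 (1 - \<bar>s - a\<bar> / g))\<bar>
          \<le> \<bar>b - a\<bar> * ((s' - s) / g)" unfolding abs_mult by (rule mult_left_mono[OF l]) auto
    also have "\<dots> < g * ((s' - s) / g)" using g that by (intro mult_strict_right_mono) auto
    also have "\<dots> = s' - s" using g by simp
    finally have X: "\<bar>(b - a) * (max 0 (1 - \<bar>s' - a\<bar> / g) - max 0 (1 - \<bar>s - a\<bar> / g))\<bar> < s' - s" .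
    have "-(s' - s) < (b - a) * (max 0 (1 - \<bar>s' - a\<bar> / g) - max 0 (1 - \<bar>s - a\<bar> / g))"
      using X by (simp only: abs_less_iff) linarith
    then show ?thesis unfolding bump_def right_diff_distrib by (rule aux_lin)
  qed
  have b0: "bump a b g 0 = 0" using bump_out[of g 0 a b] g by auto
  have img: "bump a b g ` {0..} = {0..}"
  proof
    show "bump a b g ` {0..} \<subseteq> {0..}"
    proof
      fix w assume "w \<in> bump a b g ` {0..}"
      then obtain s where s: "s \<ge> 0" "w = bump a b g s" by auto
      show "w \<in> {0..}"
      proof (cases "s = 0")
        case True then show ?thesis using s b0 by simp
      next
        case False then show ?thesis using s sm[of 0 s] b0 by simp
      qed
    qed
  next
    show "{0..} \<subseteq> bump a b g ` {0..}"
    proof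
      fix w :: real assume "w \<in> {0..}"
      then have w: "w \<ge> 0" by simp
      have e: "bump a b g (w + a + g) = w + a + g" using bump_out[of g "w + a + g" a b] g w by auto
      obtain s where "s \<ge> 0" "s \<le> w + a + g" "bump a b g s = w"
        using IVT'[of "bump a b g" 0 w "w + a + g"] b0 e w g continuous_on_subset[OF cont]
        by auto
      then show "w \<in> bump a b g ` {0..}" by auto
    qed
  qed
  show ?thesis unfolding time_change_def
    using continuous_on_subset[OF cont] img sm by (auto simp: strict_mono_on_def)
qed

lemma multi_bump:
  fixes E :: "real set"
  assumes "finite E" "g > 0"
    "\<forall>p\<in>E. g \<le> p" "\<forall>p\<in>E. \<forall>q\<in>E. p \<noteq> q \<longrightarrow> \<bar>p - q\<bar> \<ge> 2 * g"
    "\<forall>p\<in>E. \<bar>b p - p\<bar> < g"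
  shows "\<exists>\<nu>. time_change \<nu> \<and> (\<forall>s. \<bar>\<nu> s - s\<bar> \<le> (\<Sum>p\<in>E. \<bar>b p - p\<bar>)) \<and> (\<forall>p\<in>E. \<nu> p = b p)
     \<and> (\<forall>s. (\<forall>p\<in>E. \<bar>s - p\<bar> \<ge> g) \<longrightarrow> \<nu> s = s)"
  using assms
proof (induction E rule: finite_induct)
  case empty
  show ?case using tc_id by (intro exI[of _ "\<lambda>s. s"]) auto
next
  case (insert p E)
  have "\<exists>\<nu>. time_change \<nu> \<and> (\<forall>s. \<bar>\<nu> s - s\<bar> \<le> (\<Sum>p\<in>E. \<bar>b p - p\<bar>)) \<and> (\<forall>p\<in>E. \<nu> p = b p)
     \<and> (\<forall>s. (\<forall>p\<in>E. \<bar>s - p\<bar> \<ge> g) \<longrightarrow> \<nu> s = s)"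
    apply (rule insert.IH) using insert.prems by auto
  then obtain \<nu> where nu: "time_change \<nu>" "\<forall>s. \<bar>\<nu> s - s\<bar> \<le> (\<Sum>p\<in>E. \<bar>b p - p\<bar>)"
    "\<forall>p\<in>E. \<nu> p = b p" "\<forall>s. (\<forall>p\<in>E. \<bar>s - p\<bar> \<ge> g) \<longrightarrow> \<nu> s = s"
    by blast
  define \<mu> where "\<mu> = (\<lambda>s. bump p (b p) g (\<nu> s))"
  have tc: "time_change \<mu>" unfolding \<mu>_def
    using tc_comp[OF bump_tc nu(1)] insert.prems by auto
  have disp: "\<bar>\<mu> s - s\<bar> \<le> (\<Sum>q\<in>insert p E. \<bar>b q - q\<bar>)" for s
  proof -
    have "\<bar>\<mu> s - s\<bar> \<le> \<bar>bump p (b p) g (\<nu> s) - \<nu> s\<bar> + \<bar>\<nu> s - s\<bar>" unfolding \<mu>_def by linarith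
    also have "\<dots> \<le> \<bar>b p - p\<bar> + (\<Sum>p\<in>E. \<bar>b p - p\<bar>)"
      using bump_disp[OF insert.prems(1)] nu(2) by (meson add_mono)
    finally show ?thesis using insert.hyps by simp
  qed
  have pfix: "\<nu> p = p"
    using nu(4) insert.prems(3) insert.hyps(2) insert.prems(1) by (metis insertCI mult_2 le_add_same_cancel2 less_le order_trans)
  have a1: "\<mu> p = b p" unfolding \<mu>_def pfix using bump_at insert.prems(1) by simp
  have a2: "\<mu> q = b q" if q: "q \<in> E" for q
  proof -
    have "q \<noteq> p" using q insert.hyps by auto
    then have "\<bar>q - p\<bar> \<ge> 2 * g" using insert.prems(3) q by auto
    moreover have "\<bar>b q - q\<bar> < g" using insert.prems(4) q by auto
    ultimately have "\<bar>b q - p\<bar> \<ge> g" by linarith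
    then show ?thesis unfolding \<mu>_def using nu(3) q bump_out insert.prems(1) by simp
  qed
  have a3: "\<mu> s = s" if "\<forall>q\<in>insert p E. \<bar>s - q\<bar> \<ge> g" for s
    using that nu(4) bump_out insert.prems(1) unfolding \<mu>_def by simp
  show ?case using tc disp a1 a2 a3 by (intro exI[of _ \<mu>]) auto
qed



definition J1w :: "(nat \<Rightarrow> real \<Rightarrow> real) \<Rightarrow> (real \<Rightarrow> real) \<Rightarrow> bool" where
  "J1w F A \<longleftrightarrow> A \<in> Dspace \<and> (\<forall>n. F n \<in> Dspace) \<and>
     (\<forall>T>0. \<forall>e>0. eventually (\<lambda>n. \<exists>l. time_change l \<and> (\<forall>s\<ge>0. \<bar>l s - s\<bar> \<le> e) \<and>
        (\<forall>s\<in>{0..T}. \<bar>F n (l s) - A s\<bar> \<le> e)) sequentially)"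

lemma J1w_imp:
  assumes "J1w F A"
  shows "J1_conv F A"
proof -
  define Good where "Good = (\<lambda>n m l. time_change l \<and> (\<forall>s\<ge>0. \<bar>l s - s\<bar> \<le> 1 / (real m + 1)) \<and>
        (\<forall>s\<in>{0..real m + 1}. \<bar>F n (l s) - A s\<bar> \<le> 1 / (real m + 1)))"
  have evG: "eventually (\<lambda>n. \<exists>l. Good n m l) sequentially" for m
    using assms unfolding J1w_def Good_def by auto
  define S where "S = (\<lambda>n. {m. m \<le> n \<and> (\<exists>l. Good n m l)})"
  have fS: "finite (S n)" for n unfolding S_def by auto
  define l where "l = (\<lambda>n. if S n = {} then (\<lambda>s. s) else (SOME l. Good n (Max (S n)) l))"
  have key: "eventually (\<lambda>n. \<exists>M\<ge>m0. Good n M (l n)) sequentially" for m0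
  proof -
    have "eventually (\<lambda>n. (\<exists>l. Good n m0 l) \<and> n \<ge> m0) sequentially"
      using evG[of m0] eventually_ge_at_top[of m0] by (rule eventually_conj)
    then show ?thesis
    proof eventually_elim
      case (elim n)
      then have m0S: "m0 \<in> S n" unfolding S_def by auto
      then have ne: "S n \<noteq> {}" by auto
      have "Max (S n) \<in> S n" using fS ne by (rule Max_in)
      then have ex: "\<exists>l. Good n (Max (S n)) l" unfolding S_def by auto
      have "Good n (Max (S n)) (l n)" using ne someI_ex[OF ex] unfolding l_def by simp
      moreover have "Max (S n) \<ge> m0" using fS m0S by auto
      ultimately show ?case by blast
    qed
  qed
  have tc: "time_change (l n)" for n
  proof (cases "S n = {}")
    case True then show ?thesis unfolding l_def using tc_id by simp
  next
    case False
    have "Max (S n) \<in> S n" using fS False by (rule Max_in)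
    then have ex: "\<exists>l. Good n (Max (S n)) l" unfolding S_def by auto
    have "Good n (Max (S n)) (l n)" using False someI_ex[OF ex] unfolding l_def by simp
    then show ?thesis unfolding Good_def by auto
  qed
  have conv: "eventually (\<lambda>n. (\<forall>s\<ge>0. \<bar>l n s - s\<bar> \<le> e) \<and> (\<forall>s\<in>{0..T}. \<bar>F n (l n s) - A s\<bar> \<le> e)) sequentially"
    if e: "e > 0" for T e
  proof -
    obtain m0 :: nat where m0: "real m0 \<ge> T" "real m0 \<ge> 1 / e" using reals_Archimedean2
      by (metis max.bounded_iff real_arch_simple)
    have ie: "1 / (real M + 1) \<le> e" if "M \<ge> m0" for M
    proof -
      have "1 / e < real M + 1" using m0 that by linarith
      then have "1 < e * (real M + 1)" using e by (simp add: field_simps)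
      then show ?thesis using e by (simp add: field_simps)
    qed
    show ?thesis using key[of m0]
    proof eventually_elim
      case (elim n)
      then obtain M where M: "M \<ge> m0" "Good n M (l n)" by blast
      have TM: "{0..T} \<subseteq> {0..real M + 1}" using m0 M by auto
      show ?case using M(2) ie[OF M(1)] TM unfolding Good_def by force
    qed
  qed
  show ?thesis unfolding J1_conv_def
  proof (intro conjI exI[of _ l])
    show "A \<in> Dspace" "\<forall>n. F n \<in> Dspace" using assms unfolding J1w_def by auto
    show "\<forall>n. time_change (l n)" using tc by auto
    show "\<forall>e>0. \<forall>\<^sub>F n in sequentially. \<forall>s\<ge>0. \<bar>l n s - s\<bar> \<le> e"
    proof (intro allI impI)
      fix e :: real assume "e > 0"
      show "\<forall>\<^sub>F n in sequentially. \<forall>s\<ge>0. \<bar>l n s - s\<bar> \<le> e"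
        using conv[OF \<open>e > 0\<close>, of 0] by (rule eventually_mono) auto
    qed
    show "\<forall>T\<ge>0. \<forall>e>0. \<forall>\<^sub>F n in sequentially. \<forall>s\<in>{0..T}. \<bar>F n (l n s) - A s\<bar> \<le> e"
    proof (intro allI impI)
      fix T e :: real assume "e > 0"
      show "\<forall>\<^sub>F n in sequentially. \<forall>s\<in>{0..T}. \<bar>F n (l n s) - A s\<bar> \<le> e"
        using conv[OF \<open>e > 0\<close>, of T] by (rule eventually_mono) auto
    qed
  qed
qed

lemma J1_unique:
  assumes "J1_conv f g1" "J1_conv f g2" "s \<ge> 0"
  shows "g1 s = g2 s"
proof -
  have "\<bar>g1 s - g2 s\<bar> \<le> 4 * e" if e: "e > 0" for e
  proof -
    have c1: "(g1 \<longlongrightarrow> g1 s) (at_right s)" "(g2 \<longlongrightarrow> g2 s) (at_right s)"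
      using assms unfolding J1_conv_def Dspace_def cadlag_def by auto
    have "eventually (\<lambda>w. \<bar>g1 w - g1 s\<bar> < e) (at_right s)"
      using c1(1) e by (simp add: tendsto_iff dist_real_def eventually_mono)
    then obtain d1 where d1: "d1 > s" "\<forall>w. s < w \<and> w < d1 \<longrightarrow> \<bar>g1 w - g1 s\<bar> < e"
      unfolding eventually_at_right_field by auto
    have "eventually (\<lambda>w. \<bar>g2 w - g2 s\<bar> < e) (at_right s)"
      using c1(2) e by (simp add: tendsto_iff dist_real_def eventually_mono)
    then obtain d2 where d2: "d2 > s" "\<forall>w. s < w \<and> w < d2 \<longrightarrow> \<bar>g2 w - g2 s\<bar> < e"
      unfolding eventually_at_right_field by auto
    define d where "d = min (d1 - s) (d2 - s)"
    have d: "d > 0" using d1 d2 unfolding d_def by auto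
    obtain l1 where l1: "\<forall>n. time_change (l1 n)" "\<forall>e>0. eventually (\<lambda>n. \<forall>s\<ge>0. \<bar>l1 n s - s\<bar> \<le> e) sequentially"
      "\<forall>T\<ge>0. \<forall>e>0. eventually (\<lambda>n. \<forall>s\<in>{0..T}. \<bar>f n (l1 n s) - g1 s\<bar> \<le> e) sequentially"
      using assms(1) unfolding J1_conv_def by blast
    obtain l2 where l2: "\<forall>n. time_change (l2 n)" "\<forall>e>0. eventually (\<lambda>n. \<forall>s\<ge>0. \<bar>l2 n s - s\<bar> \<le> e) sequentially"
      "\<forall>T\<ge>0. \<forall>e>0. eventually (\<lambda>n. \<forall>s\<in>{0..T}. \<bar>f n (l2 n s) - g2 s\<bar> \<le> e) sequentially"
      using assms(2) unfolding J1_conv_def by blast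
    have T: "s + d \<ge> 0" using assms(3) d by simp
    have "eventually (\<lambda>n. (\<forall>s\<ge>0. \<bar>l1 n s - s\<bar> \<le> d/8) \<and> (\<forall>s\<ge>0. \<bar>l2 n s - s\<bar> \<le> d/8) \<and>
       (\<forall>w\<in>{0..s+d}. \<bar>f n (l1 n w) - g1 w\<bar> \<le> e) \<and> (\<forall>w\<in>{0..s+d}. \<bar>f n (l2 n w) - g2 w\<bar> \<le> e)) sequentially"
      (is "eventually ?P _")
      using l1(2)[rule_format, of "d/8"] l2(2)[rule_format, of "d/8"] l1(3)[rule_format, OF T e] l2(3)[rule_format, OF T e] d
      by (intro eventually_conj) auto
    then obtain n where n: "\<forall>s\<ge>0. \<bar>l1 n s - s\<bar> \<le> d/8" "\<forall>s\<ge>0. \<bar>l2 n s - s\<bar> \<le> d/8"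
       "\<forall>w\<in>{0..s+d}. \<bar>f n (l1 n w) - g1 w\<bar> \<le> e" "\<forall>w\<in>{0..s+d}. \<bar>f n (l2 n w) - g2 w\<bar> \<le> e"
    proof -
      obtain N where "\<forall>n\<ge>N. ?P n" using \<open>eventually ?P _\<close> unfolding eventually_sequentially by blast
      then have "?P N" by blast
      then show ?thesis using that by blast
    qed
    define r where "r = s + d/2"
    have r0: "r \<ge> 0" using assms(3) d unfolding r_def by simp
    define p where "p = l1 n r"
    have p0: "p \<ge> 0" unfolding p_def using tc_0[OF l1(1)[rule_format] r0] .
    obtain w where w: "w \<ge> 0" "l2 n w = p" using tc_inv[OF l2(1)[rule_format] p0] by blast
    have "\<bar>w - r\<bar> \<le> d/4" using n(1)[rule_format, OF r0] n(2)[rule_format, OF w(1)] w(2) unfolding p_def by linarith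
    then have "w - r \<le> d/4 \<and> -(w - r) \<le> d/4" by (simp only: abs_le_iff)
    then have wr: "s < w" "w < s + d" unfolding r_def using d by linarith+
    have "d \<le> d1 - s" unfolding d_def by simp
    then have "s < r" "r < d1" using d d1 unfolding r_def by auto
    then have a: "\<bar>g1 r - g1 s\<bar> < e" using d1 by auto
    have b: "\<bar>g2 w - g2 s\<bar> < e" using d2 wr d unfolding d_def by auto
    have c: "\<bar>f n p - g1 r\<bar> \<le> e" using n(3) r0 d unfolding p_def r_def by auto
    have c2: "\<bar>f n p - g2 w\<bar> \<le> e" using n(4) wr w by (metis atLeastAtMost_iff less_imp_le)
    show ?thesis using a b c c2 by linarith
  qed
  note * = this
  have "\<bar>g1 s - g2 s\<bar> \<le> 0 + e" if "e > 0" for e using *[of "e/4"] that by simp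
  then have "\<bar>g1 s - g2 s\<bar> \<le> 0" by (rule field_le_epsilon)
  then show ?thesis by simp
qed



lemma Dspace_zero_neg:
  assumes "g \<in> Dspace"
  shows "(\<lambda>s. if s < 0 then 0 else g s) \<in> Dspace"
  unfolding Dspace_def cadlag_def
proof (intro CollectI conjI allI impI)
  fix t :: real assume t: "t \<ge> 0"
  have ev: "eventually (\<lambda>w. (if w < 0 then 0 else g w) = g w) (at_right t)"
    using eventually_at_right_real[of t "t+1"] by (rule eventually_mono) (use t in auto)
  have "(g \<longlongrightarrow> g t) (at_right t)" using assms t unfolding Dspace_def cadlag_def by auto
  then show "((\<lambda>s. if s < 0 then 0 else g s) \<longlongrightarrow> (if t < 0 then 0 else g t)) (at_right t)"
    using tendsto_cong[OF ev] t by simp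
next
  fix t :: real assume t: "t > 0"
  have ev: "eventually (\<lambda>w. (if w < 0 then 0 else g w) = g w) (at_left t)"
    using eventually_at_left_real[OF t] by (rule eventually_mono) auto
  obtain l where "(g \<longlongrightarrow> l) (at_left t)" using assms t unfolding Dspace_def cadlag_def by auto
  then show "\<exists>l. ((\<lambda>s. if s < 0 then 0 else g s) \<longlongrightarrow> l) (at_left t)"
    using tendsto_cong[OF ev] by blast
qed

lemma J1_zero_neg:
  assumes "J1_conv f g"
  shows "J1_conv f (\<lambda>s. if s < 0 then 0 else g s)"
proof -
  have D: "(\<lambda>s. if s < 0 then 0 else g s) \<in> Dspace" using assms Dspace_zero_neg unfolding J1_conv_def by auto
  show ?thesis using assms D unfolding J1_conv_def by (auto simp: atLeastAtMost_iff)
qed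

lemma D_lim_char:
  assumes "J1_conv f g"
  shows "D_lim f = (\<lambda>s. if s < 0 then 0 else g s)"
  unfolding D_lim_def
proof (rule the_equality)
  show "J1_conv f (\<lambda>s. if s < 0 then 0 else g s) \<and> (\<forall>s<0. (if s < 0 then 0 else g s) = 0)"
    using J1_zero_neg[OF assms] by simp
next
  fix h assume h: "J1_conv f h \<and> (\<forall>s<0. h s = 0)"
  show "h = (\<lambda>s. if s < 0 then 0 else g s)"
  proof
    fix s :: real show "h s = (if s < 0 then 0 else g s)"
      using h J1_unique[OF _ assms, of h s] by (cases "s < 0") auto
  qed
qed

lemma D_lim_conv:
  assumes "J1_conv f g"
  shows "J1_conv f (D_lim f)" "\<And>s. s < 0 \<Longrightarrow> D_lim f s = 0"
  using D_lim_char[OF assms] J1_zero_neg[OF assms] by auto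

lemma fin_gap:
  fixes E :: "real set"
  assumes "finite E"
  shows "\<exists>g>0. \<forall>p\<in>E. \<forall>q\<in>E. p \<noteq> q \<longrightarrow> g \<le> \<bar>p - q\<bar>"
proof -
  define D where "D = (\<lambda>(p,q). \<bar>p - q\<bar>) ` {(p,q). p\<in>E \<and> q\<in>E \<and> p\<noteq>q}"
  have "{(p,q). p\<in>E \<and> q\<in>E \<and> p\<noteq>q} \<subseteq> E \<times> E" by auto
  then have fD: "finite D" unfolding D_def using assms finite_subset by blast
  define g where "g = (if D = {} then 1 else Min D)"
  have pos: "\<forall>x\<in>D. x > 0" unfolding D_def by auto
  have "g > 0" unfolding g_def using fD pos by auto
  moreover have "\<forall>p\<in>E. \<forall>q\<in>E. p \<noteq> q \<longrightarrow> g \<le> \<bar>p - q\<bar>"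
  proof (intro ballI impI)
    fix p q assume "p \<in> E" "q \<in> E" "p \<noteq> q"
    then have "\<bar>p - q\<bar> \<in> D" unfolding D_def by force
    then show "g \<le> \<bar>p - q\<bar>" unfolding g_def using fD by auto
  qed
  ultimately show ?thesis by blast
qed

lemma tc_inv_props:
  assumes "time_change l" "w \<ge> 0"
  shows "l (inv_into {0..} l w) = w" "inv_into {0..} l w \<ge> 0"
proof -
  have "w \<in> l ` {0..}" using assms unfolding time_change_def by auto
  then show "l (inv_into {0..} l w) = w" "inv_into {0..} l w \<ge> 0"
    using f_inv_into_f[of w l "{0..}"] inv_into_into[of w l "{0..}"] by auto
qed

lemma tc_inv_left:
  assumes "time_change l" "s \<ge> 0"
  shows "inv_into {0..} l (l s) = s"
proof -
  have "inj_on l {0..}" using assms(1) unfolding time_change_def by (auto intro: strict_mono_on_imp_inj_on)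
  then show ?thesis using assms(2) by (simp add: inv_into_f_f)
qed

lemma tc_inv_mono:
  assumes "time_change l" "0 \<le> a" "a < b"
  shows "inv_into {0..} l a < inv_into {0..} l b"
proof (rule ccontr)
  assume "\<not> ?thesis"
  then have le: "inv_into {0..} l b \<le> inv_into {0..} l a" by simp
  have "l (inv_into {0..} l b) \<le> l (inv_into {0..} l a)"
  proof (cases "inv_into {0..} l b = inv_into {0..} l a")
    case True then show ?thesis by simp
  next
    case False
    then have "inv_into {0..} l b < inv_into {0..} l a" using le by simp
    then show ?thesis using tc_mono[OF assms(1) tc_inv_props(2)[OF assms(1)], of b] assms by force
  qed
  then show False using tc_inv_props(1)[OF assms(1)] assms by auto
qed

lemma tc_inv_disp:
  assumes "time_change l" "\<forall>s\<ge>0. \<bar>l s - s\<bar> \<le> e" "w \<ge> 0"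
  shows "\<bar>inv_into {0..} l w - w\<bar> \<le> e"
  using assms(2)[rule_format, OF tc_inv_props(2)[OF assms(1,3)]] tc_inv_props(1)[OF assms(1,3)]
  by (simp add: abs_minus_commute)

lemma left_lim_bound:
  assumes l: "time_change l" and p: "p > 0" "p \<le> Tb" and A: "A \<in> Dspace"
    and unif: "\<forall>s\<in>{0..Tb}. \<bar>F (l s) - A s\<bar> \<le> e"
    and d: "d > 0" "\<forall>w. l p - d < w \<and> w < l p \<longrightarrow> F w = c"
  shows "\<bar>c - Lim (at_left p) A\<bar> \<le> e"
proof -
  obtain L where L: "(A \<longlongrightarrow> L) (at_left p)" using A p unfolding Dspace_def cadlag_def by auto
  have LL: "Lim (at_left p) A = L" using L by (intro tendsto_Lim) (auto simp: trivial_limit_at_left_real)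
  have "continuous_on {0..} l" using l unfolding time_change_def by auto
  then obtain \<eta> where eta: "\<eta> > 0" "\<forall>s\<in>{0..}. dist s p < \<eta> \<longrightarrow> dist (l s) (l p) < d"
    using d(1) p unfolding continuous_on_iff by (metis atLeast_iff less_imp_le)
  have ev: "eventually (\<lambda>s. s \<in> {max (p - \<eta>) 0<..<p}) (at_left p)"
  proof -
    have "max (p - \<eta>) 0 < p" using eta p by simp
    then show ?thesis using eventually_at_left_real by blast
  qed
  have ev2: "eventually (\<lambda>s. \<bar>c - A s\<bar> \<le> e) (at_left p)"
    using ev
  proof (rule eventually_mono)
    fix s assume s: "s \<in> {max (p - \<eta>) 0<..<p}"
    then have s0: "s \<ge> 0" "s < p" "dist s p < \<eta>" by (auto simp: dist_real_def)
    then have "dist (l s) (l p) < d" using eta by auto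
    moreover have "l s < l p" using tc_mono[OF l s0(1,2)] .
    ultimately have "l p - d < l s \<and> l s < l p" by (auto simp: dist_real_def)
    then have "F (l s) = c" using d(2) by auto
    then show "\<bar>c - A s\<bar> \<le> e" using unif s0 p by auto
  qed
  have "((\<lambda>s. \<bar>c - A s\<bar>) \<longlongrightarrow> \<bar>c - L\<bar>) (at_left p)" using L by (intro tendsto_intros)
  then have "\<bar>c - L\<bar> \<le> e" using ev2 by (rule tendsto_upperbound) (simp add: trivial_limit_at_left_real)
  then show ?thesis using LL by simp
qed



lemma CO:
  assumes f: "f \<in> Dspace" and th: "\<theta> > 0" and T: "T \<ge> 0"
  shows "\<exists>\<delta>>0. \<exists>P. finite P \<and> P \<subseteq> {0<..T} \<and>
    (\<forall>r s. 0 \<le> r \<and> r \<le> s \<and> s \<le> T \<and> s - r < \<delta> \<longrightarrow>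
       \<bar>f s - f r\<bar> \<le> \<theta> \<or> (\<exists>p\<in>P. r < p \<and> p \<le> s \<and> \<bar>f s - f r\<bar> \<le> \<theta> + \<bar>f p - Lim (at_left p) f\<bar>))"
proof -
  have loc: "\<exists>d>0. (\<forall>w. p \<le> w \<and> w < p + d \<longrightarrow> \<bar>f w - f p\<bar> \<le> \<theta>/2) \<and>
       (p > 0 \<longrightarrow> (\<forall>w. p - d < w \<and> w < p \<longrightarrow> \<bar>f w - Lim (at_left p) f\<bar> \<le> \<theta>/2))"
    if p: "p \<in> {0..T}" for p
  proof -
    have rc: "(f \<longlongrightarrow> f p) (at_right p)" using f p unfolding Dspace_def cadlag_def by auto
    have "eventually (\<lambda>w. \<bar>f w - f p\<bar> < \<theta>/2) (at_right p)"
      using rc[unfolded tendsto_iff dist_real_def, rule_format, of "\<theta>/2"] th by simp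
    then obtain b1 where b1: "b1 > p" "\<forall>w. p < w \<and> w < b1 \<longrightarrow> \<bar>f w - f p\<bar> < \<theta>/2"
      unfolding eventually_at_right_field by auto
    show ?thesis
    proof (cases "p > 0")
      case True
      obtain L where L: "(f \<longlongrightarrow> L) (at_left p)" using f True unfolding Dspace_def cadlag_def by auto
      have LL: "Lim (at_left p) f = L" using L by (intro tendsto_Lim) (auto simp: trivial_limit_at_left_real)
      have "eventually (\<lambda>w. \<bar>f w - L\<bar> < \<theta>/2) (at_left p)"
        using L[unfolded tendsto_iff dist_real_def, rule_format, of "\<theta>/2"] th by simp
      then obtain b2 where b2: "b2 < p" "\<forall>w. b2 < w \<and> w < p \<longrightarrow> \<bar>f w - L\<bar> < \<theta>/2"
        unfolding eventually_at_left_field by auto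
      define d where "d = min (b1 - p) (p - b2)"
      have "d > 0" using b1 b2 unfolding d_def by auto
      moreover have "\<forall>w. p \<le> w \<and> w < p + d \<longrightarrow> \<bar>f w - f p\<bar> \<le> \<theta>/2"
      proof (intro allI impI)
        fix w assume w: "p \<le> w \<and> w < p + d"
        show "\<bar>f w - f p\<bar> \<le> \<theta>/2"
        proof (cases "w = p")
          case False
          have "d \<le> b1 - p" unfolding d_def by simp
          then have "p < w \<and> w < b1" using w False by auto
          then show ?thesis using b1 by force
        qed (use th in simp)
      qed
      moreover have "\<forall>w. p - d < w \<and> w < p \<longrightarrow> \<bar>f w - Lim (at_left p) f\<bar> \<le> \<theta>/2"
      proof (intro allI impI)
        fix w assume w: "p - d < w \<and> w < p"
        have "d \<le> p - b2" unfolding d_def by simp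
        then have "b2 < w \<and> w < p" using w by auto
        then show "\<bar>f w - Lim (at_left p) f\<bar> \<le> \<theta>/2" using b2 LL by force
      qed
      ultimately show ?thesis by blast
    next
      case False
      define d where "d = b1 - p"
      have "d > 0" using b1 unfolding d_def by auto
      moreover have "\<forall>w. p \<le> w \<and> w < p + d \<longrightarrow> \<bar>f w - f p\<bar> \<le> \<theta>/2"
      proof (intro allI impI)
        fix w assume w: "p \<le> w \<and> w < p + d"
        show "\<bar>f w - f p\<bar> \<le> \<theta>/2"
        proof (cases "w = p")
          case False
          then have "p < w \<and> w < b1" using w unfolding d_def by auto
          then show ?thesis using b1 by force
        qed (use th in simp)
      qed
      ultimately show ?thesis using False by blast
    qed
  qed
  have "\<forall>p\<in>{0..T}. \<exists>d>0. (\<forall>w. p \<le> w \<and> w < p + d \<longrightarrow> \<bar>f w - f p\<bar> \<le> \<theta>/2) \<and>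
       (p > 0 \<longrightarrow> (\<forall>w. p - d < w \<and> w < p \<longrightarrow> \<bar>f w - Lim (at_left p) f\<bar> \<le> \<theta>/2))"
    using loc by blast
  then obtain d where d: "\<forall>p\<in>{0..T}. d p > 0 \<and> (\<forall>w. p \<le> w \<and> w < p + d p \<longrightarrow> \<bar>f w - f p\<bar> \<le> \<theta>/2) \<and>
       (p > 0 \<longrightarrow> (\<forall>w. p - d p < w \<and> w < p \<longrightarrow> \<bar>f w - Lim (at_left p) f\<bar> \<le> \<theta>/2))"
    by (rule bchoice[THEN exE]) blast
  have cov: "{0..T} \<subseteq> \<Union> ((\<lambda>p. ball p (d p)) ` {0..T})"
    using d by force
  obtain K where K: "K \<subseteq> {0..T}" "finite K" "{0..T} \<subseteq> \<Union> ((\<lambda>p. ball p (d p)) ` K)"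
    using compactE_image[OF compact_Icc[of 0 T] _ cov] by blast
  obtain \<epsilon> where eps: "\<epsilon> > 0" "\<And>x. x \<in> {0..T} \<Longrightarrow> \<exists>G\<in>(\<lambda>p. ball p (d p)) ` K. ball x \<epsilon> \<subseteq> G"
    using Heine_Borel_lemma[OF compact_Icc[of 0 T] K(3)] by blast
  define P where "P = K \<inter> {0<..}"
  have "finite P" "P \<subseteq> {0<..T}" using K unfolding P_def by auto
  moreover have "\<forall>r s. 0 \<le> r \<and> r \<le> s \<and> s \<le> T \<and> s - r < \<epsilon> \<longrightarrow>
       \<bar>f s - f r\<bar> \<le> \<theta> \<or> (\<exists>p\<in>P. r < p \<and> p \<le> s \<and> \<bar>f s - f r\<bar> \<le> \<theta> + \<bar>f p - Lim (at_left p) f\<bar>)"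
  proof (intro allI impI)
    fix r s assume rs: "0 \<le> r \<and> r \<le> s \<and> s \<le> T \<and> s - r < \<epsilon>"
    then obtain p where p: "p \<in> K" "ball r \<epsilon> \<subseteq> ball p (d p)" using eps(2)[of r] by auto
    have "r \<in> ball r \<epsilon>" "s \<in> ball r \<epsilon>" using rs eps(1) by (auto simp: dist_real_def)
    then have "r \<in> ball p (d p)" "s \<in> ball p (d p)" using p(2) by (meson subsetD)+
    then have rp: "\<bar>r - p\<bar> < d p" "\<bar>s - p\<bar> < d p" by (auto simp: dist_real_def abs_minus_commute)
    have pT: "p \<in> {0..T}" using p K by auto
    note dp = d[rule_format, OF pT]
    show "\<bar>f s - f r\<bar> \<le> \<theta> \<or> (\<exists>p\<in>P. r < p \<and> p \<le> s \<and> \<bar>f s - f r\<bar> \<le> \<theta> + \<bar>f p - Lim (at_left p) f\<bar>)"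
    proof (cases "p \<le> r")
      case True
      then have "\<bar>f r - f p\<bar> \<le> \<theta>/2" "\<bar>f s - f p\<bar> \<le> \<theta>/2" using dp rp rs by auto
      then show ?thesis by linarith
    next
      case False
      then have p0: "p > 0" using rs by auto
      show ?thesis
      proof (cases "s < p")
        case True
        then have "\<bar>f r - Lim (at_left p) f\<bar> \<le> \<theta>/2" "\<bar>f s - Lim (at_left p) f\<bar> \<le> \<theta>/2"
          using dp rp rs p0 False by auto
        then show ?thesis by linarith
      next
        case sp: False
        then have "\<bar>f r - Lim (at_left p) f\<bar> \<le> \<theta>/2" "\<bar>f s - f p\<bar> \<le> \<theta>/2"
          using dp rp rs p0 False by auto
        then have "\<bar>f s - f r\<bar> \<le> \<theta> + \<bar>f p - Lim (at_left p) f\<bar>" by linarith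
        moreover have "p \<in> P" using p p0 unfolding P_def by auto
        ultimately show ?thesis using False sp by auto
      qed
    qed
  qed
  ultimately show ?thesis using eps(1) by blast
qed



lemma lemG:
  fixes u v A :: "real \<Rightarrow> real"
  assumes pt: "partition_seq t k"
    and J: "J1_conv (qvar t k u v) A"
    and T: "T > 0" and ep: "\<epsilon> > 0"
    and E: "finite E" "E \<subseteq> {0<..T+3}"
    and hu: "\<delta>u > 0" "\<forall>r s. 0 \<le> r \<and> r \<le> s \<and> s \<le> T+3 \<and> s - r < \<delta>u \<and> (\<forall>p\<in>E. \<not>(r < p \<and> p \<le> s))
               \<longrightarrow> \<bar>u s - u r\<bar> \<le> \<theta> \<and> \<bar>v s - v r\<bar> \<le> \<theta>"
    and th: "\<theta> \<ge> 0" "\<theta> * \<theta> \<le> \<epsilon>/10"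
    and hA: "\<delta>A > 0" "\<forall>r s. 0 \<le> r \<and> r \<le> s \<and> s \<le> T+3 \<and> s - r < \<delta>A \<longrightarrow>
       \<bar>A s - A r\<bar> \<le> \<epsilon>/4 \<or> (\<exists>p\<in>E. r < p \<and> p \<le> s \<and> \<bar>A s - A r\<bar> \<le> \<epsilon>/4 + \<bar>A p - Lim (at_left p) A\<bar>)"
  shows "\<exists>\<beta>>0. eventually (\<lambda>n. \<forall>\<nu>. time_change \<nu> \<and> (\<forall>s\<ge>0. \<bar>\<nu> s - s\<bar> \<le> \<beta>) \<and>
           (\<forall>p\<in>E. \<exists>i<k n. t n i < p \<and> p \<le> t n (Suc i) \<and> \<nu> p = t n i)
           \<longrightarrow> (\<forall>s\<in>{0..T}. \<bar>qvar t k u v n (\<nu> s) - A s\<bar> \<le> \<epsilon>)) sequentially"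
proof -
  let ?F = "qvar t k u v"
  obtain l where l: "\<forall>n. time_change (l n)" "\<forall>e>0. eventually (\<lambda>n. \<forall>s\<ge>0. \<bar>l n s - s\<bar> \<le> e) sequentially"
      "\<forall>T\<ge>0. \<forall>e>0. eventually (\<lambda>n. \<forall>s\<in>{0..T}. \<bar>?F n (l n s) - A s\<bar> \<le> e) sequentially"
    using J unfolding J1_conv_def by blast
  have AD: "A \<in> Dspace" using J unfolding J1_conv_def by auto
  obtain g where g: "g > 0" "\<forall>p\<in>E. \<forall>q\<in>E. p \<noteq> q \<longrightarrow> g \<le> \<bar>p - q\<bar>" using fin_gap[OF E(1)] by blast
  define \<sigma> where "\<sigma> = min (1/4) (min (\<delta>A/4) (g/4))"
  define \<beta> where "\<beta> = min (1/4) (\<delta>A/2)"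
  define m0 where "m0 = min \<delta>u (min (g/2) 1)"
  have sig: "\<sigma> > 0" "\<sigma> \<le> 1/4" "\<sigma> \<le> \<delta>A/4" "\<sigma> \<le> g/4" using hA g unfolding \<sigma>_def by auto
  have bet: "\<beta> > 0" "\<beta> \<le> 1/4" "\<beta> \<le> \<delta>A/2" using hA unfolding \<beta>_def by auto
  have m0: "m0 > 0" "m0 \<le> \<delta>u" "m0 \<le> g/2" "m0 \<le> 1" using hu g unfolding m0_def by auto
  have ev: "eventually (\<lambda>n. (\<forall>s\<ge>0. \<bar>l n s - s\<bar> \<le> \<sigma>) \<and> (\<forall>s\<in>{0..T+2}. \<bar>?F n (l n s) - A s\<bar> \<le> \<epsilon>/8) \<and>
     (\<forall>i<k n. t n i \<le> T+3 \<longrightarrow> t n (Suc i) - t n i < m0)) sequentially"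
  proof (intro eventually_conj)
    show "eventually (\<lambda>n. \<forall>s\<ge>0. \<bar>l n s - s\<bar> \<le> \<sigma>) sequentially" using l(2) sig by auto
    show "eventually (\<lambda>n. \<forall>s\<in>{0..T+2}. \<bar>?F n (l n s) - A s\<bar> \<le> \<epsilon>/8) sequentially"
      using l(3)[rule_format, of "T+2" "\<epsilon>/8"] T ep by simp
    show "eventually (\<lambda>n. \<forall>i<k n. t n i \<le> T+3 \<longrightarrow> t n (Suc i) - t n i < m0) sequentially"
      using pt m0 T unfolding partition_seq_def by (meson add_pos_pos zero_less_numeral)
  qed
  have main: "\<forall>\<nu>. time_change \<nu> \<and> (\<forall>s\<ge>0. \<bar>\<nu> s - s\<bar> \<le> \<beta>) \<and>
           (\<forall>p\<in>E. \<exists>i<k n. t n i < p \<and> p \<le> t n (Suc i) \<and> \<nu> p = t n i)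
           \<longrightarrow> (\<forall>s\<in>{0..T}. \<bar>?F n (\<nu> s) - A s\<bar> \<le> \<epsilon>)"
    if n: "(\<forall>s\<ge>0. \<bar>l n s - s\<bar> \<le> \<sigma>)" "(\<forall>s\<in>{0..T+2}. \<bar>?F n (l n s) - A s\<bar> \<le> \<epsilon>/8)"
       "(\<forall>i<k n. t n i \<le> T+3 \<longrightarrow> t n (Suc i) - t n i < m0)" for n
  proof (intro allI impI)
    fix \<nu> assume nu: "time_change \<nu> \<and> (\<forall>s\<ge>0. \<bar>\<nu> s - s\<bar> \<le> \<beta>) \<and>
           (\<forall>p\<in>E. \<exists>i<k n. t n i < p \<and> p \<le> t n (Suc i) \<and> \<nu> p = t n i)"
    have ln: "time_change (l n)" using l(1) by auto
    have K: "l n p = \<nu> p" if pE: "p \<in> E" and pT: "p \<le> T+1" and big: "\<bar>A p - Lim (at_left p) A\<bar> > \<epsilon>/2" for p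
    proof -
      have p0: "p > 0" using pE E by auto
      define q where "q = l n p"
      have q0: "q \<ge> 0" unfolding q_def using tc_0[OF ln] p0 by simp
      have qp: "\<bar>q - p\<bar> \<le> \<sigma>" unfolding q_def using n(1) p0 by simp
      have c1: "\<bar>?F n q - A p\<bar> \<le> \<epsilon>/8" unfolding q_def using n(2) p0 pT by simp
      obtain d where d: "d > 0" "\<forall>w. q - d < w \<and> w < q \<longrightarrow> ?F n w = qlt t k u v n q"
        using qvar_left by blast
      have c2: "\<bar>qlt t k u v n q - Lim (at_left p) A\<bar> \<le> \<epsilon>/8"
        using left_lim_bound[OF ln p0 _ AD n(2), of d "qlt t k u v n q"] d pT unfolding q_def by simp
      have jump: "\<bar>?F n q - qlt t k u v n q\<bar> > \<epsilon>/4" using c1 c2 big by linarith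
      then have "?F n q \<noteq> qlt t k u v n q" using ep by auto
      then obtain j where j: "j < k n" "t n j = q"
          "?F n q - qlt t k u v n q = (u (t n (Suc j)) - u (t n j)) * (v (t n (Suc j)) - v (t n j))"
        using qvar_jump[OF pt] by blast
      have inside: "t n j < p \<and> p \<le> t n (Suc j)"
      proof (rule ccontr)
        assume out: "\<not> (t n j < p \<and> p \<le> t n (Suc j))"
        have tj0: "t n j \<ge> 0" using part_nonneg[OF pt] j(1) by simp
        have tjs: "t n j < t n (Suc j)" using pt j(1) unfolding partition_seq_def by auto
        have tjT2: "t n j \<le> T+2" using j(2) qp sig pT by (simp add: abs_le_iff) 
        then have tjT: "t n j \<le> T+3" by simp
        have mesh: "t n (Suc j) - t n j < m0" using n(3) j(1) tjT by auto
        have noE: "\<forall>p'\<in>E. \<not>(t n j < p' \<and> p' \<le> t n (Suc j))"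
        proof (intro ballI notI)
          fix p' assume p'E: "p' \<in> E" and p'in: "t n j < p' \<and> p' \<le> t n (Suc j)"
          show False
          proof (cases "p' = p")
            case True then show False using out p'in by simp
          next
            case False
            then have "g \<le> \<bar>p' - p\<bar>" using g(2) p'E pE by auto
            moreover have "\<bar>p' - p\<bar> < g" using p'in mesh j(2) qp sig m0 by (simp add: abs_le_iff abs_less_iff)
            ultimately show False by simp
          qed
        qed
        have "\<bar>u (t n (Suc j)) - u (t n j)\<bar> \<le> \<theta> \<and> \<bar>v (t n (Suc j)) - v (t n j)\<bar> \<le> \<theta>"
          using hu(2)[rule_format, of "t n j" "t n (Suc j)"] tj0 tjs mesh m0 noE tjT2 by auto
        then have "\<bar>(u (t n (Suc j)) - u (t n j)) * (v (t n (Suc j)) - v (t n j))\<bar> \<le> \<theta> * \<theta>"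
          unfolding abs_mult using th(1) by (intro mult_mono) auto
        then show False using j(3) jump th(2) ep by simp
      qed
      obtain i where i: "i < k n" "t n i < p" "p \<le> t n (Suc i)" "\<nu> p = t n i" using nu pE by blast
      have "i = j" using pi_unique[OF pt i(1) j(1) i(2) i(3)] inside by blast
      then show ?thesis using i(4) j(2) unfolding q_def by simp
    qed
    show "\<forall>s\<in>{0..T}. \<bar>?F n (\<nu> s) - A s\<bar> \<le> \<epsilon>"
    proof
      fix s assume s: "s \<in> {0..T}"
      have nus: "\<nu> s \<ge> 0" using tc_0 nu s by auto
      define \<rho> where "\<rho> = inv_into {0..} (l n) (\<nu> s)"
      have r1: "l n \<rho> = \<nu> s" "\<rho> \<ge> 0" unfolding \<rho>_def using tc_inv_props[OF ln nus] by auto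
      have r2: "\<bar>\<rho> - \<nu> s\<bar> \<le> \<sigma>" unfolding \<rho>_def using tc_inv_disp[OF ln n(1) nus] .
      have r3: "\<bar>\<nu> s - s\<bar> \<le> \<beta>" using nu s by auto
      have rs: "\<bar>\<rho> - s\<bar> < \<delta>A" using r2 r3 sig bet hA by linarith
      have rT: "\<rho> \<le> T + 1" using r2 r3 sig bet s by auto
      have c1: "\<bar>?F n (\<nu> s) - A \<rho>\<bar> \<le> \<epsilon>/8" 
      proof -
        have "\<rho> \<in> {0..T+2}" using r1(2) rT by simp
        then show ?thesis using n(2) r1(1) by force
      qed
      define a where "a = min s \<rho>"
      define b where "b = max s \<rho>"
      have ab: "0 \<le> a" "a \<le> b" "b \<le> T+3" "b - a < \<delta>A" "b \<le> T+1"
        using s r1 rT rs unfolding a_def b_def by (auto simp: abs_less_iff)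
      have Aab: "\<bar>A \<rho> - A s\<bar> = \<bar>A b - A a\<bar>" unfolding a_def b_def by (cases "s \<le> \<rho>") (auto simp: abs_minus_commute)
      have "\<bar>A b - A a\<bar> \<le> 3*\<epsilon>/4"
      proof -
        have "\<bar>A b - A a\<bar> \<le> \<epsilon>/4 \<or> (\<exists>p\<in>E. a < p \<and> p \<le> b \<and> \<bar>A b - A a\<bar> \<le> \<epsilon>/4 + \<bar>A p - Lim (at_left p) A\<bar>)"
          using hA(2) ab by blast
        then show ?thesis
        proof
          assume "\<bar>A b - A a\<bar> \<le> \<epsilon>/4" then show ?thesis using ep by simp
        next
          assume "\<exists>p\<in>E. a < p \<and> p \<le> b \<and> \<bar>A b - A a\<bar> \<le> \<epsilon>/4 + \<bar>A p - Lim (at_left p) A\<bar>"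
          then obtain p where p: "p \<in> E" "a < p" "p \<le> b" "\<bar>A b - A a\<bar> \<le> \<epsilon>/4 + \<bar>A p - Lim (at_left p) A\<bar>"
            by blast
          have "\<bar>A p - Lim (at_left p) A\<bar> \<le> \<epsilon>/2"
          proof (rule ccontr)
            assume "\<not> ?thesis"
            then have big: "\<bar>A p - Lim (at_left p) A\<bar> > \<epsilon>/2" by simp
            have eq: "l n p = \<nu> p" using K[OF p(1) _ big] p(3) ab by simp
            have p0: "p > 0" using p(1) E by auto
            have invp: "inv_into {0..} (l n) (\<nu> p) = p" using tc_inv_left[OF ln, of p] eq p0 by simp
            show False
            proof (cases "s < p")
              case True
              then have "\<nu> s < \<nu> p" using tc_mono nu s by auto
              then have "\<rho> < p" unfolding \<rho>_def using tc_inv_mono[OF ln nus] invp by metis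
              then show False using p(3) True unfolding b_def by simp
            next
              case False
              then have "p \<le> \<rho>"
              proof (cases "s = p")
                case True then show ?thesis using invp unfolding \<rho>_def by simp
              next
                case False
                then have "p < s" using \<open>\<not> s < p\<close> by simp
                then have "\<nu> p < \<nu> s" using tc_mono nu p0 by auto
                then have "p < \<rho>" unfolding \<rho>_def using tc_inv_mono[OF ln, of "\<nu> p" "\<nu> s"] invp tc_0 nu p0
                  by (metis less_imp_le)
                then show ?thesis by simp
              qed
              then show False using p(2) False unfolding a_def by simp
            qed
          qed
          then show ?thesis using p(4) by simp
        qed
      qed
      then show "\<bar>?F n (\<nu> s) - A s\<bar> \<le> \<epsilon>" using c1 Aab ep by linarith
    qed
  qed
  show ?thesis using bet(1) ev main by (intro exI[of _ \<beta>]) (auto elim: eventually_mono)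
qed



lemma pi_exists:
  assumes pt: "partition_seq t k" and p: "0 < p" "p \<le> t n (k n)"
  shows "\<exists>i<k n. t n i < p \<and> p \<le> t n (Suc i)"
proof -
  define S where "S = {i. i \<le> k n \<and> t n i < p}"
  have t0: "t n 0 = 0" using pt unfolding partition_seq_def by auto
  have fS: "finite S" unfolding S_def by auto
  have 0: "0 \<in> S" unfolding S_def using t0 p by auto
  define i where "i = Max S"
  have iS: "i \<in> S" unfolding i_def using fS 0 by (auto intro: Max_in)
  have ik: "i < k n" using iS p unfolding S_def by (metis le_neq_implies_less mem_Collect_eq not_le)
  have "Suc i \<notin> S" using fS unfolding i_def by (metis Max_ge Suc_n_not_le_n)
  then have "p \<le> t n (Suc i)" using ik unfolding S_def by auto
  then show ?thesis using ik iS unfolding S_def by auto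
qed

lemma nu_exists:
  assumes pt: "partition_seq t k" and E: "finite E" "E \<subseteq> {0<..T+3}" and T: "T > 0" and b: "\<beta> > 0"
  shows "eventually (\<lambda>n. \<exists>\<nu>. time_change \<nu> \<and> (\<forall>s\<ge>0. \<bar>\<nu> s - s\<bar> \<le> \<beta>) \<and>
     (\<forall>p\<in>E. \<exists>i<k n. t n i < p \<and> p \<le> t n (Suc i) \<and> \<nu> p = t n i)) sequentially"
proof (cases "E = {}")
  case True
  then show ?thesis using tc_id b by (intro always_eventually allI exI[of _ "\<lambda>s. s"]) auto
next
  case False
  obtain g where g: "g > 0" "\<forall>p\<in>E. \<forall>q\<in>E. p \<noteq> q \<longrightarrow> g \<le> \<bar>p - q\<bar>" using fin_gap[OF E(1)] by blast
  have mE: "Min E > 0" using E False by auto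
  define \<gamma> where "\<gamma> = min (g/2) (Min E / 2)"
  have ga: "\<gamma> > 0" "\<forall>p\<in>E. \<gamma> \<le> p" "\<forall>p\<in>E. \<forall>q\<in>E. p \<noteq> q \<longrightarrow> \<bar>p - q\<bar> \<ge> 2 * \<gamma>"
  proof -
    show "\<gamma> > 0" unfolding \<gamma>_def using g mE by auto
    show "\<forall>p\<in>E. \<gamma> \<le> p"
    proof
      fix p assume "p \<in> E"
      then have "Min E \<le> p" using E(1) by auto
      then show "\<gamma> \<le> p" unfolding \<gamma>_def using mE by linarith
    qed
    show "\<forall>p\<in>E. \<forall>q\<in>E. p \<noteq> q \<longrightarrow> \<bar>p - q\<bar> \<ge> 2 * \<gamma>"
      using g unfolding \<gamma>_def by fastforce
  qed
  define m where "m = min \<gamma> (\<beta> / (real (card E) + 1))"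
  have m: "m > 0" "m \<le> \<gamma>" "m * real (card E) \<le> \<beta>"
  proof -
    show "m > 0" "m \<le> \<gamma>" unfolding m_def using ga b by auto
    have "m * real (card E) \<le> (\<beta> / (real (card E) + 1)) * real (card E)" unfolding m_def
      by (intro mult_right_mono) auto
    also have "\<dots> \<le> \<beta>" using b by (simp add: field_simps)
    finally show "m * real (card E) \<le> \<beta>" .
  qed
  have ev1: "eventually (\<lambda>n. t n (k n) \<ge> T+3) sequentially"
    using pt unfolding partition_seq_def filterlim_at_top by auto
  have ev2: "eventually (\<lambda>n. \<forall>i<k n. t n i \<le> T+3 \<longrightarrow> t n (Suc i) - t n i < m) sequentially"
    using pt m T unfolding partition_seq_def by (meson add_pos_pos zero_less_numeral)
  show ?thesis using ev1 ev2
  proof eventually_elim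
    case (elim n)
    have ex: "\<forall>p\<in>E. \<exists>i<k n. t n i < p \<and> p \<le> t n (Suc i)"
      using pi_exists[OF pt] elim E by force
    define idx where "idx = (\<lambda>p. SOME i. i < k n \<and> t n i < p \<and> p \<le> t n (Suc i))"
    have idx: "idx p < k n \<and> t n (idx p) < p \<and> p \<le> t n (Suc (idx p))" if "p \<in> E" for p
      unfolding idx_def using ex that by (metis (mono_tags, lifting) someI_ex)
    define bb where "bb = (\<lambda>p. t n (idx p))"
    have close: "\<bar>bb p - p\<bar> < m" if "p \<in> E" for p
    proof -
      have "t n (idx p) \<le> T+3" using idx[OF that] that E by auto
      then have "t n (Suc (idx p)) - t n (idx p) < m" using elim idx[OF that] by auto
      then show ?thesis using idx[OF that] unfolding bb_def by auto
    qed
    have "\<forall>p\<in>E. \<bar>bb p - p\<bar> < \<gamma>" using close m by force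
    then obtain \<nu> where nu: "time_change \<nu>" "\<forall>s. \<bar>\<nu> s - s\<bar> \<le> (\<Sum>p\<in>E. \<bar>bb p - p\<bar>)" "\<forall>p\<in>E. \<nu> p = bb p"
      using multi_bump[OF E(1) ga(1) ga(2) ga(3)] by blast
    have "(\<Sum>p\<in>E. \<bar>bb p - p\<bar>) \<le> (\<Sum>p\<in>E. m)" using close by (intro sum_mono) (simp add: less_imp_le)
    also have "\<dots> = m * real (card E)" by simp
    also have "\<dots> \<le> \<beta>" using m by simp
    finally have "\<forall>s\<ge>0. \<bar>\<nu> s - s\<bar> \<le> \<beta>" using nu(2) by (meson order_trans)
    moreover have "\<forall>p\<in>E. \<exists>i<k n. t n i < p \<and> p \<le> t n (Suc i) \<and> \<nu> p = t n i"
      using idx nu(3) unfolding bb_def by blast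
    ultimately show ?case using nu(1) by blast
  qed
qed



lemma CO_E:
  assumes "f \<in> Dspace" "\<theta> > 0" "T \<ge> 0"
  obtains \<delta> P where "\<delta> > 0" "finite P" "P \<subseteq> {0<..T}"
    "\<forall>r s. 0 \<le> r \<and> r \<le> s \<and> s \<le> T \<and> s - r < \<delta> \<longrightarrow>
       \<bar>f s - f r\<bar> \<le> \<theta> \<or> (\<exists>p\<in>P. r < p \<and> p \<le> s \<and> \<bar>f s - f r\<bar> \<le> \<theta> + \<bar>f p - Lim (at_left p) f\<bar>)"
  using CO[OF assms] by (elim exE conjE) (rule that, assumption+)

lemma abs3: "\<bar>a*x + b*y + c*z\<bar> \<le> \<bar>a\<bar>*\<bar>x\<bar> + \<bar>b\<bar>*\<bar>y\<bar> + \<bar>c\<bar>*\<bar>z\<bar>" for a b c x y z :: real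
  using abs_triangle_ineq[of "a*x+b*y" "c*z"] abs_triangle_ineq[of "a*x" "b*y"] by (simp add: abs_mult)

lemma combo:
  assumes pt: "partition_seq t k" and x: "x \<in> Dspace" and y: "y \<in> Dspace"
    and W: "u1 \<in> {x, y, \<lambda>s. x s + y s}" "v1 \<in> {x, y, \<lambda>s. x s + y s}"
       "u2 \<in> {x, y, \<lambda>s. x s + y s}" "v2 \<in> {x, y, \<lambda>s. x s + y s}"
       "u3 \<in> {x, y, \<lambda>s. x s + y s}" "v3 \<in> {x, y, \<lambda>s. x s + y s}"
    and J: "J1_conv (qvar t k u1 v1) A1" "J1_conv (qvar t k u2 v2) A2" "J1_conv (qvar t k u3 v3) A3"
  shows "J1_conv (\<lambda>n s. c1 * qvar t k u1 v1 n s + c2 * qvar t k u2 v2 n s + c3 * qvar t k u3 v3 n s)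
           (\<lambda>s. c1 * A1 s + c2 * A2 s + c3 * A3 s)"
proof (rule J1w_imp)
  let ?G = "\<lambda>n s. c1 * qvar t k u1 v1 n s + c2 * qvar t k u2 v2 n s + c3 * qvar t k u3 v3 n s"
  let ?A = "\<lambda>s. c1 * A1 s + c2 * A2 s + c3 * A3 s"
  have AD: "A1 \<in> Dspace" "A2 \<in> Dspace" "A3 \<in> Dspace" using J unfolding J1_conv_def by auto
  have lin3: "(\<lambda>s. c1 * f1 s + c2 * f2 s + c3 * f3 s) \<in> Dspace"
    if "f1 \<in> Dspace" "f2 \<in> Dspace" "f3 \<in> Dspace" for f1 f2 f3
  proof -
    have "(\<lambda>s. c1 * f1 s + c2 * f2 s) \<in> Dspace" using Dspace_lin[OF that(1,2)] .
    from Dspace_lin[OF this that(3), of 1 c3] show ?thesis by simp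
  qed
  show "J1w ?G ?A" unfolding J1w_def
  proof (intro conjI allI impI)
    show "?A \<in> Dspace" using lin3[OF AD] .
    fix n show "?G n \<in> Dspace" using lin3[OF qvar_Dspace qvar_Dspace qvar_Dspace] .
  next
    fix T e :: real assume T: "T > 0" and e: "e > 0"
    define C where "C = \<bar>c1\<bar> + \<bar>c2\<bar> + \<bar>c3\<bar> + 1"
    have C: "C \<ge> 1" unfolding C_def by simp
    define \<epsilon> where "\<epsilon> = e / C"
    have ep: "\<epsilon> > 0" unfolding \<epsilon>_def using e C by simp
    have epC: "(\<bar>c1\<bar> + \<bar>c2\<bar> + \<bar>c3\<bar>) * \<epsilon> \<le> e"
    proof -
      have "(\<bar>c1\<bar> + \<bar>c2\<bar> + \<bar>c3\<bar>) * \<epsilon> \<le> C * \<epsilon>" unfolding C_def using ep by (intro mult_right_mono) auto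
      also have "\<dots> = e" unfolding \<epsilon>_def using C by simp
      finally show ?thesis .
    qed
    define \<theta> where "\<theta> = min 1 (\<epsilon>/10)"
    have th: "\<theta> > 0" "\<theta> \<le> 1" "\<theta> \<le> \<epsilon>/10" unfolding \<theta>_def using ep by auto
    have th2: "\<theta> * \<theta> \<le> \<epsilon>/10"
    proof -
      have "\<theta> * \<theta> \<le> 1 * \<theta>" using th by (intro mult_right_mono) auto
      then show ?thesis using th(3) by linarith
    qed
    have T3: "T + 3 \<ge> 0" using T by simp
    have h2: "\<theta>/2 > 0" using th by simp
    have h4: "\<epsilon>/4 > 0" using ep by simp
    obtain \<delta>x Px where Px: "\<delta>x > 0" "finite Px" "Px \<subseteq> {0<..T+3}"
      "\<forall>r s. 0 \<le> r \<and> r \<le> s \<and> s \<le> T+3 \<and> s - r < \<delta>x \<longrightarrow>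
       \<bar>x s - x r\<bar> \<le> \<theta>/2 \<or> (\<exists>p\<in>Px. r < p \<and> p \<le> s \<and> \<bar>x s - x r\<bar> \<le> \<theta>/2 + \<bar>x p - Lim (at_left p) x\<bar>)"
      using CO_E[OF x h2 T3] by blast
    obtain \<delta>y Py where Py: "\<delta>y > 0" "finite Py" "Py \<subseteq> {0<..T+3}"
      "\<forall>r s. 0 \<le> r \<and> r \<le> s \<and> s \<le> T+3 \<and> s - r < \<delta>y \<longrightarrow>
       \<bar>y s - y r\<bar> \<le> \<theta>/2 \<or> (\<exists>p\<in>Py. r < p \<and> p \<le> s \<and> \<bar>y s - y r\<bar> \<le> \<theta>/2 + \<bar>y p - Lim (at_left p) y\<bar>)"
      using CO_E[OF y h2 T3] by blast
    obtain \<delta>1 P1 where P1: "\<delta>1 > 0" "finite P1" "P1 \<subseteq> {0<..T+3}"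
      "\<forall>r s. 0 \<le> r \<and> r \<le> s \<and> s \<le> T+3 \<and> s - r < \<delta>1 \<longrightarrow>
       \<bar>A1 s - A1 r\<bar> \<le> \<epsilon>/4 \<or> (\<exists>p\<in>P1. r < p \<and> p \<le> s \<and> \<bar>A1 s - A1 r\<bar> \<le> \<epsilon>/4 + \<bar>A1 p - Lim (at_left p) A1\<bar>)"
      using CO_E[OF AD(1) h4 T3] by blast
    obtain \<delta>2 P2 where P2: "\<delta>2 > 0" "finite P2" "P2 \<subseteq> {0<..T+3}"
      "\<forall>r s. 0 \<le> r \<and> r \<le> s \<and> s \<le> T+3 \<and> s - r < \<delta>2 \<longrightarrow>
       \<bar>A2 s - A2 r\<bar> \<le> \<epsilon>/4 \<or> (\<exists>p\<in>P2. r < p \<and> p \<le> s \<and> \<bar>A2 s - A2 r\<bar> \<le> \<epsilon>/4 + \<bar>A2 p - Lim (at_left p) A2\<bar>)"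
      using CO_E[OF AD(2) h4 T3] by blast
    obtain \<delta>3 P3 where P3: "\<delta>3 > 0" "finite P3" "P3 \<subseteq> {0<..T+3}"
      "\<forall>r s. 0 \<le> r \<and> r \<le> s \<and> s \<le> T+3 \<and> s - r < \<delta>3 \<longrightarrow>
       \<bar>A3 s - A3 r\<bar> \<le> \<epsilon>/4 \<or> (\<exists>p\<in>P3. r < p \<and> p \<le> s \<and> \<bar>A3 s - A3 r\<bar> \<le> \<epsilon>/4 + \<bar>A3 p - Lim (at_left p) A3\<bar>)"
      using CO_E[OF AD(3) h4 T3] by blast
    define E where "E = Px \<union> Py \<union> P1 \<union> P2 \<union> P3"
    have E: "finite E" "E \<subseteq> {0<..T+3}" unfolding E_def using Px Py P1 P2 P3 by auto
    define \<delta>u where "\<delta>u = min \<delta>x \<delta>y"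
    have du: "\<delta>u > 0" unfolding \<delta>u_def using Px Py by auto
    have hW: "\<forall>r s. 0 \<le> r \<and> r \<le> s \<and> s \<le> T+3 \<and> s - r < \<delta>u \<and> (\<forall>p\<in>E. \<not>(r < p \<and> p \<le> s))
               \<longrightarrow> \<bar>w s - w r\<bar> \<le> \<theta>" if w: "w \<in> {x, y, \<lambda>s. x s + y s}" for w
    proof (intro allI impI)
      fix r s assume rs: "0 \<le> r \<and> r \<le> s \<and> s \<le> T+3 \<and> s - r < \<delta>u \<and> (\<forall>p\<in>E. \<not>(r < p \<and> p \<le> s))"
      have "\<bar>x s - x r\<bar> \<le> \<theta>/2" using Px(4)[rule_format, of r s] rs unfolding \<delta>u_def E_def by auto
      moreover have "\<bar>y s - y r\<bar> \<le> \<theta>/2" using Py(4)[rule_format, of r s] rs unfolding \<delta>u_def E_def by auto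
      moreover have "\<bar>x s + y s - (x r + y r)\<bar> \<le> \<bar>x s - x r\<bar> + \<bar>y s - y r\<bar>" by linarith
      ultimately show "\<bar>w s - w r\<bar> \<le> \<theta>" using w th by auto
    qed
    have hU: "\<forall>r s. 0 \<le> r \<and> r \<le> s \<and> s \<le> T+3 \<and> s - r < \<delta>u \<and> (\<forall>p\<in>E. \<not>(r < p \<and> p \<le> s))
               \<longrightarrow> \<bar>uu s - uu r\<bar> \<le> \<theta> \<and> \<bar>vv s - vv r\<bar> \<le> \<theta>"
      if "uu \<in> {x, y, \<lambda>s. x s + y s}" "vv \<in> {x, y, \<lambda>s. x s + y s}" for uu vv
      using hW[OF that(1)] hW[OF that(2)] by blast
    have hA: "\<forall>r s. 0 \<le> r \<and> r \<le> s \<and> s \<le> T+3 \<and> s - r < \<delta>a \<longrightarrow>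
       \<bar>a s - a r\<bar> \<le> \<epsilon>/4 \<or> (\<exists>p\<in>E. r < p \<and> p \<le> s \<and> \<bar>a s - a r\<bar> \<le> \<epsilon>/4 + \<bar>a p - Lim (at_left p) a\<bar>)"
      if "\<forall>r s. 0 \<le> r \<and> r \<le> s \<and> s \<le> T+3 \<and> s - r < \<delta>a \<longrightarrow>
       \<bar>a s - a r\<bar> \<le> \<epsilon>/4 \<or> (\<exists>p\<in>P. r < p \<and> p \<le> s \<and> \<bar>a s - a r\<bar> \<le> \<epsilon>/4 + \<bar>a p - Lim (at_left p) a\<bar>)"
        "P \<subseteq> E" for a :: "real \<Rightarrow> real" and \<delta>a P
      using that by blast
    obtain \<beta>1 where b1: "\<beta>1 > 0" "eventually (\<lambda>n. \<forall>\<nu>. time_change \<nu> \<and> (\<forall>s\<ge>0. \<bar>\<nu> s - s\<bar> \<le> \<beta>1) \<and>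
           (\<forall>p\<in>E. \<exists>i<k n. t n i < p \<and> p \<le> t n (Suc i) \<and> \<nu> p = t n i)
           \<longrightarrow> (\<forall>s\<in>{0..T}. \<bar>qvar t k u1 v1 n (\<nu> s) - A1 s\<bar> \<le> \<epsilon>)) sequentially"
      using lemG[OF pt J(1) T ep E du hU[OF W(1,2)] less_imp_le[OF th(1)] th2 P1(1) hA[OF P1(4)]]
      unfolding E_def by blast
    obtain \<beta>2 where b2: "\<beta>2 > 0" "eventually (\<lambda>n. \<forall>\<nu>. time_change \<nu> \<and> (\<forall>s\<ge>0. \<bar>\<nu> s - s\<bar> \<le> \<beta>2) \<and>
           (\<forall>p\<in>E. \<exists>i<k n. t n i < p \<and> p \<le> t n (Suc i) \<and> \<nu> p = t n i)
           \<longrightarrow> (\<forall>s\<in>{0..T}. \<bar>qvar t k u2 v2 n (\<nu> s) - A2 s\<bar> \<le> \<epsilon>)) sequentially"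
      using lemG[OF pt J(2) T ep E du hU[OF W(3,4)] less_imp_le[OF th(1)] th2 P2(1) hA[OF P2(4)]]
      unfolding E_def by blast
    obtain \<beta>3 where b3: "\<beta>3 > 0" "eventually (\<lambda>n. \<forall>\<nu>. time_change \<nu> \<and> (\<forall>s\<ge>0. \<bar>\<nu> s - s\<bar> \<le> \<beta>3) \<and>
           (\<forall>p\<in>E. \<exists>i<k n. t n i < p \<and> p \<le> t n (Suc i) \<and> \<nu> p = t n i)
           \<longrightarrow> (\<forall>s\<in>{0..T}. \<bar>qvar t k u3 v3 n (\<nu> s) - A3 s\<bar> \<le> \<epsilon>)) sequentially"
      using lemG[OF pt J(3) T ep E du hU[OF W(5,6)] less_imp_le[OF th(1)] th2 P3(1) hA[OF P3(4)]]
      unfolding E_def by blast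
    define \<beta> where "\<beta> = min (min \<beta>1 \<beta>2) (min \<beta>3 e)"
    have bet: "\<beta> > 0" "\<beta> \<le> \<beta>1" "\<beta> \<le> \<beta>2" "\<beta> \<le> \<beta>3" "\<beta> \<le> e" unfolding \<beta>_def using b1 b2 b3 e by auto
    have evnu: "eventually (\<lambda>n. \<exists>\<nu>. time_change \<nu> \<and> (\<forall>s\<ge>0. \<bar>\<nu> s - s\<bar> \<le> \<beta>) \<and>
     (\<forall>p\<in>E. \<exists>i<k n. t n i < p \<and> p \<le> t n (Suc i) \<and> \<nu> p = t n i)) sequentially"
      using nu_exists[OF pt E T bet(1)] .
    show "eventually (\<lambda>n. \<exists>l. time_change l \<and> (\<forall>s\<ge>0. \<bar>l s - s\<bar> \<le> e) \<and>
        (\<forall>s\<in>{0..T}. \<bar>?G n (l s) - ?A s\<bar> \<le> e)) sequentially"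
      using evnu b1(2) b2(2) b3(2)
    proof eventually_elim
      case (elim n)
      then obtain \<nu> where nu: "time_change \<nu>" "\<forall>s\<ge>0. \<bar>\<nu> s - s\<bar> \<le> \<beta>"
        "\<forall>p\<in>E. \<exists>i<k n. t n i < p \<and> p \<le> t n (Suc i) \<and> \<nu> p = t n i" by blast
      have d1: "\<forall>s\<ge>0. \<bar>\<nu> s - s\<bar> \<le> \<beta>1" "\<forall>s\<ge>0. \<bar>\<nu> s - s\<bar> \<le> \<beta>2" "\<forall>s\<ge>0. \<bar>\<nu> s - s\<bar> \<le> \<beta>3"
        "\<forall>s\<ge>0. \<bar>\<nu> s - s\<bar> \<le> e"
        using nu(2) bet by (meson order_trans)+
      have f1: "\<forall>s\<in>{0..T}. \<bar>qvar t k u1 v1 n (\<nu> s) - A1 s\<bar> \<le> \<epsilon>" using elim(2) nu(1,3) d1(1) by blast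
      have f2: "\<forall>s\<in>{0..T}. \<bar>qvar t k u2 v2 n (\<nu> s) - A2 s\<bar> \<le> \<epsilon>" using elim(3) nu(1,3) d1(2) by blast
      have f3: "\<forall>s\<in>{0..T}. \<bar>qvar t k u3 v3 n (\<nu> s) - A3 s\<bar> \<le> \<epsilon>" using elim(4) nu(1,3) d1(3) by blast
      have "\<forall>s\<in>{0..T}. \<bar>?G n (\<nu> s) - ?A s\<bar> \<le> e"
      proof
        fix s assume s: "s \<in> {0..T}"
        let ?d1 = "qvar t k u1 v1 n (\<nu> s) - A1 s"
        let ?d2 = "qvar t k u2 v2 n (\<nu> s) - A2 s"
        let ?d3 = "qvar t k u3 v3 n (\<nu> s) - A3 s"
        have eq: "?G n (\<nu> s) - ?A s = c1 * ?d1 + c2 * ?d2 + c3 * ?d3" by (simp add: algebra_simps)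
        have "\<bar>c1 * ?d1 + c2 * ?d2 + c3 * ?d3\<bar> \<le> \<bar>c1\<bar> * \<bar>?d1\<bar> + \<bar>c2\<bar> * \<bar>?d2\<bar> + \<bar>c3\<bar> * \<bar>?d3\<bar>"
          by (rule abs3)
        also have "\<dots> \<le> \<bar>c1\<bar> * \<epsilon> + \<bar>c2\<bar> * \<epsilon> + \<bar>c3\<bar> * \<epsilon>"
          using f1 f2 f3 s by (intro add_mono mult_left_mono) auto
        also have "\<dots> \<le> e" using epC by (simp add: algebra_simps)
        finally show "\<bar>?G n (\<nu> s) - ?A s\<bar> \<le> e" using eq by simp
      qed
      then show ?case using nu(1) d1(4) by blast
    qed
  qed
qed



lemma qvar_sum_id:
  "qvar t k (\<lambda>s. x s + y s) (\<lambda>s. x s + y s) n s = 1 * qvar t k x x n s + 1 * qvar t k y y n s + 2 * qvar t k x y n s"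
  unfolding qvar_def by (simp add: sum.distrib[symmetric] sum_distrib_left algebra_simps power2_eq_square)

theorem proposition3p4:
  fixes t :: "nat \<Rightarrow> nat \<Rightarrow> real" and k :: "nat \<Rightarrow> nat" and x y :: "real \<Rightarrow> real"
  assumes "partition_seq t k"
    and "x \<in> Qpi t k" and "y \<in> Qpi t k"
  shows "(D_convergent (qvar t k (\<lambda>s. x s + y s) (\<lambda>s. x s + y s))
           \<longleftrightarrow> D_convergent (qvar t k x y)) \<and>
         (D_convergent (qvar t k x y) \<longrightarrow>
           (\<lambda>s. x s + y s) \<in> Qpi t k \<and>
           D_lim (qvar t k x y) =
             (\<lambda>s. (qv_bracket t k (\<lambda>s. x s + y s) s - qv_bracket t k x s - qv_bracket t k y s) / 2))"
proof -
  note pt = assms(1)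
  have x: "x \<in> Dspace" and Dx: "D_convergent (qvar t k x x)" using assms(2) unfolding Qpi_def by auto
  have y: "y \<in> Dspace" and Dy: "D_convergent (qvar t k y y)" using assms(3) unfolding Qpi_def by auto
  let ?Fx = "qvar t k x x" and ?Fy = "qvar t k y y" and ?H = "qvar t k x y"
  let ?S = "qvar t k (\<lambda>s. x s + y s) (\<lambda>s. x s + y s)"
  obtain A0 where "J1_conv ?Fx A0" using Dx unfolding D_convergent_def by blast
  then have JA: "J1_conv ?Fx (D_lim ?Fx)" "\<And>s. s < 0 \<Longrightarrow> D_lim ?Fx s = 0" using D_lim_conv by auto
  obtain B0 where "J1_conv ?Fy B0" using Dy unfolding D_convergent_def by blast
  then have JB: "J1_conv ?Fy (D_lim ?Fy)" "\<And>s. s < 0 \<Longrightarrow> D_lim ?Fy s = 0" using D_lim_conv by auto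
  have W: "x \<in> {x, y, \<lambda>s. x s + y s}" "y \<in> {x, y, \<lambda>s. x s + y s}" "(\<lambda>s. x s + y s) \<in> {x, y, \<lambda>s. x s + y s}"
    by auto
  have idS: "?S = (\<lambda>n s. 1 * ?Fx n s + 1 * ?Fy n s + 2 * ?H n s)"
    using qvar_sum_id by blast
  have idH: "?H = (\<lambda>n s. (1/2) * ?S n s + (-1/2) * ?Fx n s + (-1/2) * ?Fy n s)"
    unfolding idS by (simp add: algebra_simps)
  have imp1: "J1_conv ?S (\<lambda>s. 1 * D_lim ?Fx s + 1 * D_lim ?Fy s + 2 * D_lim ?H s)"
    if hh: "D_convergent ?H"
  proof -
    obtain C0 where "J1_conv ?H C0" using hh unfolding D_convergent_def by blast
    then have JC: "J1_conv ?H (D_lim ?H)" using D_lim_conv by auto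
    show ?thesis unfolding idS
      by (rule combo[OF pt x y W(1) W(1) W(2) W(2) W(1) W(2) JA(1) JB(1) JC])
  qed
  have imp2: "D_convergent ?H" if hs: "D_convergent ?S"
  proof -
    obtain D0 where "J1_conv ?S D0" using hs unfolding D_convergent_def by blast
    then have JD: "J1_conv ?S (D_lim ?S)" using D_lim_conv by auto
    have "J1_conv (\<lambda>n s. (1/2) * ?S n s + (-1/2) * ?Fx n s + (-1/2) * ?Fy n s)
       (\<lambda>s. (1/2) * D_lim ?S s + (-1/2) * D_lim ?Fx s + (-1/2) * D_lim ?Fy s)"
      by (rule combo[OF pt x y W(3) W(3) W(1) W(1) W(2) W(2) JD JA(1) JB(1)])
    then show ?thesis unfolding D_convergent_def idH[symmetric] by blast
  qed
  have part1: "D_convergent ?S \<longleftrightarrow> D_convergent ?H"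
    using imp1 imp2 unfolding D_convergent_def by blast
  have part2: "(\<lambda>s. x s + y s) \<in> Qpi t k \<and>
           D_lim ?H = (\<lambda>s. (qv_bracket t k (\<lambda>s. x s + y s) s - qv_bracket t k x s - qv_bracket t k y s) / 2)"
    if HC: "D_convergent ?H"
  proof -
    have J: "J1_conv ?S (\<lambda>s. 1 * D_lim ?Fx s + 1 * D_lim ?Fy s + 2 * D_lim ?H s)" using imp1[OF HC] .
    have JCn: "\<And>s. s < 0 \<Longrightarrow> D_lim ?H s = 0"
    proof -
      obtain C0 where "J1_conv ?H C0" using HC unfolding D_convergent_def by blast
      then show "\<And>s. s < 0 \<Longrightarrow> D_lim ?H s = 0" using D_lim_conv by auto
    qed
    have xyD: "(\<lambda>s. x s + y s) \<in> Dspace" using Dspace_lin[OF x y, of 1 1] by simp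
    have Q: "(\<lambda>s. x s + y s) \<in> Qpi t k" unfolding Qpi_def D_convergent_def using xyD J by blast
    have DS: "D_lim ?S s = D_lim ?Fx s + D_lim ?Fy s + 2 * D_lim ?H s" for s
      using D_lim_char[OF J] JA(2) JB(2) JCn by (cases "s < 0") auto
    have "D_lim ?H = (\<lambda>s. (qv_bracket t k (\<lambda>s. x s + y s) s - qv_bracket t k x s - qv_bracket t k y s) / 2)"
      unfolding qv_bracket_def DS by auto
    then show ?thesis using Q by blast
  qed
  show ?thesis using part1 part2 by blast
qed



end
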